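(* Let $n\ge4$ be even and let $\varphi$ be a smooth skew-morphism of $D_n$ with $\mathrm{Ker}\,\varphi=\langle a^2\rangle$ and power function $\pi$; let $k$ be the order of $\varphi$. Then there exist integers $r,s\in\{0,\dots,n/2-1\}$, $u$ with $\gcd(u,n/2)=1$, and $e,f\in\{1,\dots,k-1\}$ such that for all integers $i$: $\varphi(a^{2i})=a^{2iu}$, $\varphi(a^{2i+1})=a^{2iu+2r+1}$, $\varphi(a^{2i}b)=a^{2iu+2s}b$, $\varphi(a^{2i+1}b)=a^{2iu+2r+2s\sigma(u,e)+1}b$, and $\pi(a^{2i})\equiv1$, $\pi(a^{2i+1})\equiv e$, $\pi(a^{2i}b)\equiv f$, $\pi(a^{2i+1}b)\equiv ef\pmod k$; and the following hold: (a) $k$ is the smallest positive integer with $r\sigma(u,k)\equiv0$ and $s\sigma(u,k)\equiv0\pmod{n/2}$; (b) $\gcd(e,k)=\gcd(f,k)=1$, $e\not\equiv1$, $f\not\equiv1$, $ef\not\equiv1$, $e^2\equiv1$, $f^2\equiv1\pmod k$; (c) $u^{e-1}\equiv1$ and $u^{f-1}\equiv1\pmod{n/2}$; (d) $r\sigma(u,e-1)\equiv u-2r-1\pmod{n/2}$; (e) $s\sigma(u,f-1)\equiv0\pmod{n/2}$; (f) $r\sigma(u,f-1)+s\sigma(u,e-1)\equiv u-2r-1\pmod{n/2}$.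
   Context: $D_n=\langle a,b\mid a^n=b^2=1,\ b^{-1}ab=a^{-1}\rangle$. A skew-morphism of a finite group $A$ is a permutation $\varphi$ of the set $A$ with $\varphi(1)=1$ for which there exists a function $\pi:A\to\mathbb{Z}_k$, where $k$ is the order of $\varphi$, such that $\varphi(xy)=\varphi(x)\varphi^{\pi(x)}(y)$ for all $x,y\in A$; $\pi$ is the power function. The kernel is $\mathrm{Ker}\,\varphi=\{x:\pi(x)=1\}$, and the core is $\mathrm{Core}\,\varphi=\bigcap_{i=1}^k\varphi^i(\mathrm{Ker}\,\varphi)$. $\varphi$ is smooth if $\varphi(x)\in x\,\mathrm{Core}\,\varphi$ for all $x$. For integers $u$ and $j\ge0$, $\sigma(u,j)=\sum_{i=1}^{j}u^{i-1}$ (so $\sigma(u,0)=0$). *)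

theory Defs
  imports "HOL-Number_Theory.Number_Theory"
begin

text \<open>The dihedral group D_n of order 2n: the element a^i b^j is the pair (i mod n, j mod 2).
  Multiplication uses b^{-1} a b = a^{-1}, i.e. b a^k = a^{-k} b.\<close>

definition dih :: "nat \<Rightarrow> (int \<times> int) set" where
  "dih n = {(i, j). 0 \<le> i \<and> i < int n \<and> (j = 0 \<or> j = 1)}"

definition dmult :: "nat \<Rightarrow> int \<times> int \<Rightarrow> int \<times> int \<Rightarrow> int \<times> int" where
  "dmult n x y = ((fst x + (if snd x = 0 then fst y else - fst y)) mod int n,
                   (snd x + snd y) mod 2)"

definition delt :: "nat \<Rightarrow> int \<Rightarrow> int \<Rightarrow> int \<times> int" where
  "delt n i j = (i mod int n, j mod 2)"

definition skew_order :: "nat \<Rightarrow> (int \<times> int \<Rightarrow> int \<times> int) \<Rightarrow> nat" where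
  "skew_order n \<phi> = (LEAST k. k > 0 \<and> (\<forall>x\<in>dih n. (\<phi> ^^ k) x = x))"

text \<open>phi is a skew-morphism of D_n with power function pi (values in Z_k represented by integers).\<close>
definition skew_morphism :: "nat \<Rightarrow> (int \<times> int \<Rightarrow> int \<times> int) \<Rightarrow> (int \<times> int \<Rightarrow> int) \<Rightarrow> bool" where
  "skew_morphism n \<phi> \<pi> \<longleftrightarrow>
     bij_betw \<phi> (dih n) (dih n) \<and> \<phi> (delt n 0 0) = delt n 0 0 \<and>
     (\<forall>x\<in>dih n. \<forall>y\<in>dih n.
        \<phi> (dmult n x y) = dmult n (\<phi> x) ((\<phi> ^^ nat (\<pi> x mod int (skew_order n \<phi>))) y))"

definition skew_ker :: "nat \<Rightarrow> (int \<times> int \<Rightarrow> int \<times> int) \<Rightarrow> (int \<times> int \<Rightarrow> int) \<Rightarrow> (int \<times> int) set" where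
  "skew_ker n \<phi> \<pi> = {x \<in> dih n. [\<pi> x = 1] (mod int (skew_order n \<phi>))}"

definition skew_core :: "nat \<Rightarrow> (int \<times> int \<Rightarrow> int \<times> int) \<Rightarrow> (int \<times> int \<Rightarrow> int) \<Rightarrow> (int \<times> int) set" where
  "skew_core n \<phi> \<pi> = (\<Inter>i\<in>{1..skew_order n \<phi>}. (\<phi> ^^ i) ` skew_ker n \<phi> \<pi>)"

definition skew_smooth :: "nat \<Rightarrow> (int \<times> int \<Rightarrow> int \<times> int) \<Rightarrow> (int \<times> int \<Rightarrow> int) \<Rightarrow> bool" where
  "skew_smooth n \<phi> \<pi> \<longleftrightarrow> (\<forall>x\<in>dih n. \<exists>c\<in>skew_core n \<phi> \<pi>. \<phi> x = dmult n x c)"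

definition sigma :: "int \<Rightarrow> nat \<Rightarrow> int" where
  "sigma u j = (\<Sum>i=1..j. u ^ (i - 1))"

end

theory Submission imports Defs "HOL-Combinatorics.Cycles" begin

lemma delt_in: "n > 0 \<Longrightarrow> delt n i j \<in> dih n"
  by (auto simp: delt_def dih_def)

lemma dih_delt: "x \<in> dih n \<Longrightarrow> x = delt n (fst x) (snd x)"
  by (auto simp: delt_def dih_def)

lemma dmult_delt: "dmult n (delt n i j) (delt n i' j') =
   delt n (if j mod 2 = 0 then i + i' else i - i') (j + j')"
  by (auto simp: dmult_def delt_def mod_add_eq mod_diff_eq)

lemma delt_eq_iff: "delt n i j = delt n i' j' \<longleftrightarrow> [i = i'] (mod int n) \<and> [j = j'] (mod 2)"
  by (simp add: delt_def cong_def)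

lemma dmult_assoc:
  assumes "x \<in> dih n" "y \<in> dih n" "z \<in> dih n"
  shows "dmult n (dmult n x y) z = dmult n x (dmult n y z)"
proof -
  have "dmult n (dmult n (delt n a b) (delt n c d)) (delt n e f) =
        dmult n (delt n a b) (dmult n (delt n c d) (delt n e f))" for a b c d e f
    unfolding dmult_delt delt_eq_iff
    by (auto simp: cong_def algebra_simps) presburger+
  then show ?thesis using dih_delt[OF assms(1)] dih_delt[OF assms(2)] dih_delt[OF assms(3)]
    by metis
qed

lemma dmult_cancel:
  assumes "x \<in> dih n" "y \<in> dih n" "y' \<in> dih n" "dmult n x y = dmult n x y'"
  shows "y = y'"
proof -
  have h: "dmult n (delt n a b) (delt n c d) = dmult n (delt n a b) (delt n c' d') \<Longrightarrow>
        delt n c d = delt n c' d'" for a b c d c' d'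
    unfolding dmult_delt delt_eq_iff
    by (auto simp: cong_iff_dvd_diff split: if_splits)
       (metis add_diff_cancel_left add_diff_cancel_left' diff_diff_eq2 dvd_diff_commute
        diff_add_cancel)+
  show ?thesis using h[of "fst x" "snd x" "fst y" "snd y" "fst y'" "snd y'"] assms dih_delt by metis
qed

lemma sigma_0[simp]: "sigma u 0 = 0" by (simp add: sigma_def)
lemma sigma_Suc: "sigma u (Suc j) = sigma u j + u ^ j"
  by (simp add: sigma_def)
lemma sigma_Suc2: "sigma u (Suc j) = u * sigma u j + 1"
proof (induction j)
  case 0 then show ?case by (simp add: sigma_Suc)
next
  case (Suc j)
  have "sigma u (Suc (Suc j)) = sigma u (Suc j) + u ^ Suc j" by (rule sigma_Suc)
  also have "\<dots> = u * (sigma u j + u ^ j) + 1" using Suc by (simp add: algebra_simps)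
  also have "\<dots> = u * sigma u (Suc j) + 1" by (simp add: sigma_Suc)
  finally show ?case .
qed
lemma sigma_geom: "(u - 1) * sigma u j = u ^ j - 1"
  by (induction j) (auto simp: sigma_Suc algebra_simps)
lemma sigma_pred: "j \<ge> 1 \<Longrightarrow> sigma u j = sigma u (j - 1) + u ^ (j - 1)"
  using sigma_Suc[of u "j - 1"] by simp

locale sk =
  fixes n :: nat and \<phi> :: "int \<times> int \<Rightarrow> int \<times> int" and \<pi> :: "int \<times> int \<Rightarrow> int"
  assumes n4: "n \<ge> 4" and ev: "even n" and sm: "skew_morphism n \<phi> \<pi>"
    and smo: "skew_smooth n \<phi> \<pi>" and ker: "skew_ker n \<phi> \<pi> = {delt n (2*i) 0 | i. True}"
begin

abbreviation "D \<equiv> dih n"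
definition "k = skew_order n \<phi>"
definition "m = int n div 2"
definition "P x = nat (\<pi> x mod int k)"

lemma npos: "n > 0" using n4 by simp
lemma n2m: "int n = 2 * m" using ev unfolding m_def by auto
lemma m2: "m \<ge> 2" using n4 n2m by simp

lemma bij: "bij_betw \<phi> D D" using sm unfolding skew_morphism_def by blast
lemma phi_in: "x \<in> D \<Longrightarrow> \<phi> x \<in> D" using bij bij_betwE by blast
lemma phi_one: "\<phi> (delt n 0 0) = delt n 0 0" using sm unfolding skew_morphism_def by blast
lemma skew: "x \<in> D \<Longrightarrow> y \<in> D \<Longrightarrow> \<phi> (dmult n x y) = dmult n (\<phi> x) ((\<phi> ^^ P x) y)"
  using sm unfolding skew_morphism_def P_def k_def by blast
lemma pow_in: "x \<in> D \<Longrightarrow> (\<phi> ^^ j) x \<in> D"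
  by (induction j) (auto intro: phi_in)
lemma din[simp]: "delt n i j \<in> D" using delt_in npos by blast

lemma order_ex: "\<exists>j>0. \<forall>x\<in>D. (\<phi> ^^ j) x = x"
proof -
  define \<psi> where "\<psi> = (\<lambda>x. if x \<in> D then \<phi> x else x)"
  have "bij_betw \<psi> D D" using bij unfolding \<psi>_def by (rule bij_betw_cong[THEN iffD1, rotated]) auto
  then have "\<psi> permutes D" by (rule bij_imp_permutes) (simp add: \<psi>_def)
  moreover have "finite D" unfolding dih_def
    by (rule finite_subset[of _ "{0..<int n} \<times> {0..1}"]) auto
  ultimately have "permutation \<psi>" using permutation_permutes by blast
  then obtain j where j: "\<psi> ^^ j = id" "j > 0" by (rule permutation_is_nilpotent)
  have "x \<in> D \<Longrightarrow> (\<psi> ^^ i) x = (\<phi> ^^ i) x" for x i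
    by (induction i) (auto simp: \<psi>_def pow_in)
  then show ?thesis using j by (metis id_apply)
qed

lemma k_pos: "k > 0" and k_id: "x \<in> D \<Longrightarrow> (\<phi> ^^ k) x = x"
  using LeastI_ex[OF order_ex] unfolding k_def skew_order_def by auto

lemma k_min: "0 < j \<Longrightarrow> j < k \<Longrightarrow> \<exists>x\<in>D. (\<phi> ^^ j) x \<noteq> x"
  using not_less_Least[of j "\<lambda>k. k > 0 \<and> (\<forall>x\<in>D. (\<phi> ^^ k) x = x)"]
  unfolding k_def skew_order_def by auto

lemma pow_kq: "x \<in> D \<Longrightarrow> (\<phi> ^^ (j + k * q)) x = (\<phi> ^^ j) x"
proof (induction q)
  case 0 then show ?case by simp
next
  case (Suc q)
  have e: "j + k * Suc q = (j + k * q) + k" by simp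
  have "(\<phi> ^^ (j + k * Suc q)) x = (\<phi> ^^ (j + k * q)) ((\<phi> ^^ k) x)"
    unfolding e by (simp only: funpow_add o_apply)
  then show ?case using Suc k_id by simp
qed

lemma pow_mod: "x \<in> D \<Longrightarrow> (\<phi> ^^ j) x = (\<phi> ^^ (j mod k)) x"
  using pow_kq[of x "j mod k" "j div k"] by simp

lemma pow_uniq:
  assumes "p < k" "q < k" "\<And>z. z \<in> D \<Longrightarrow> (\<phi> ^^ p) z = (\<phi> ^^ q) z"
  shows "p = q"
proof (rule ccontr)
  assume ne: "p \<noteq> q"
  have main: "p < q \<Longrightarrow> p < k \<Longrightarrow> q < k \<Longrightarrow> (\<And>z. z \<in> D \<Longrightarrow> (\<phi> ^^ p) z = (\<phi> ^^ q) z) \<Longrightarrow> False" for p q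
  proof -
    assume pq: "p < q" "p < k" "q < k" and h: "\<And>z. z \<in> D \<Longrightarrow> (\<phi> ^^ p) z = (\<phi> ^^ q) z"
    have "(\<phi> ^^ (q - p)) z = z" if z: "z \<in> D" for z
    proof -
      have "(\<phi> ^^ (k - p)) ((\<phi> ^^ p) z) = (\<phi> ^^ (k - p + p)) z"
        by (simp only: funpow_add o_apply)
      also have "k - p + p = k" using pq by simp
      finally have "(\<phi> ^^ (k - p)) ((\<phi> ^^ p) z) = (\<phi> ^^ k) z" .
      also have "\<dots> = z" using k_id z by simp
      finally have 1: "(\<phi> ^^ (k - p)) ((\<phi> ^^ q) z) = z" using h z by simp
      have "(\<phi> ^^ (k - p)) ((\<phi> ^^ q) z) = (\<phi> ^^ (k - p + q)) z"
        by (simp only: funpow_add o_apply)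
      also have "k - p + q = (q - p) + k" using pq by simp
      also have "(\<phi> ^^ ((q - p) + k)) z = (\<phi> ^^ (q - p)) ((\<phi> ^^ k) z)"
        by (simp only: funpow_add o_apply)
      finally have "(\<phi> ^^ (k - p)) ((\<phi> ^^ q) z) = (\<phi> ^^ (q - p)) ((\<phi> ^^ k) z)" .
      then show ?thesis using 1 k_id z by simp
    qed
    then show False using k_min[of "q - p"] pq by (metis diff_less_mono2 zero_less_diff less_imp_diff_less)
  qed
  show False using ne main[of p q] main[of q p] assms by (metis linorder_neqE_nat)
qed

lemma P_lt: "P x < k" using k_pos unfolding P_def
  by (simp add: nat_less_iff)

lemma mem_ker: "x \<in> skew_ker n \<phi> \<pi> \<longleftrightarrow> x \<in> D \<and> [\<pi> x = 1] (mod int k)"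
  unfolding skew_ker_def k_def by simp

lemma even_mod: "even ((2 * i) mod int n)"
  using ev by (metis dvd_mod even_mult_iff even_numeral even_of_nat)

lemma A_notker: "delt n 1 0 \<notin> skew_ker n \<phi> \<pi>"
proof
  assume "delt n 1 0 \<in> skew_ker n \<phi> \<pi>"
  then obtain i where "delt n 1 0 = delt n (2*i) 0" using ker by auto
  then have "1 mod int n = (2*i) mod int n" by (simp add: delt_def)
  then show False using even_mod[of i] n4 by simp
qed

lemma B_notker: "delt n j 1 \<notin> skew_ker n \<phi> \<pi>"
  using ker by (auto simp: delt_def)

lemma k2: "k \<ge> 2"
proof (rule ccontr)
  assume "\<not> k \<ge> 2"
  then have "k = 1" using k_pos by simp
  then have "delt n 1 0 \<in> skew_ker n \<phi> \<pi>" unfolding mem_ker by (simp add: cong_def)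
  then show False using A_notker by simp
qed

lemma ker_cong: "[\<pi> (delt n (2*i) 0) = 1] (mod int k)"
  using ker mem_ker by blast

lemma P_ker: "P (delt n (2*i) 0) = 1"
  using ker_cong[of i] k2 unfolding P_def cong_def by simp

lemma core_sub: "skew_core n \<phi> \<pi> \<subseteq> skew_ker n \<phi> \<pi>"
proof
  fix c assume "c \<in> skew_core n \<phi> \<pi>"
  then have "c \<in> (\<phi> ^^ k) ` skew_ker n \<phi> \<pi>" unfolding skew_core_def k_def[symmetric]
    using k_pos by auto
  then obtain y where "y \<in> skew_ker n \<phi> \<pi>" "c = (\<phi> ^^ k) y" by blast
  then show "c \<in> skew_ker n \<phi> \<pi>" using k_id mem_ker by auto
qed

lemma smooth: "\<exists>c. \<phi> (delt n t j) = delt n (t + 2 * c) j"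
proof -
  obtain c where c: "c \<in> skew_core n \<phi> \<pi>" "\<phi> (delt n t j) = dmult n (delt n t j) c"
    using smo din unfolding skew_smooth_def by blast
  then obtain i where "c = delt n (2*i) 0" using core_sub ker by blast
  with c have ph: "\<phi> (delt n t j) = delt n (if j mod 2 = 0 then t + 2 * i else t - 2 * i) j"
    by (simp add: dmult_delt)
  then show ?thesis
  proof (cases "j mod 2 = 0")
    case False
    then have "\<phi> (delt n t j) = delt n (t + 2 * (-i)) j" using ph by simp
    then show ?thesis by blast
  qed auto
qed


lemma dmult_in: "dmult n x y \<in> D"
  using npos by (auto simp: dmult_def dih_def)

definition "gK t = delt n (2*t) 0"
definition "gA t = delt n (2*t+1) 0"
definition "gB t = delt n (2*t) 1"
definition "gAB t = delt n (2*t+1) 1"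
lemmas g_defs = gK_def gA_def gB_def gAB_def

lemma g_in[simp]: "gK t \<in> D" "gA t \<in> D" "gB t \<in> D" "gAB t \<in> D" by (simp_all add: g_defs)

lemma cong2: "[2*x + a = 2*y + a] (mod int n) \<longleftrightarrow> [x = y] (mod m)"
proof -
  have "2*x + a - (2*y + a) = 2 * (x - y)" by simp
  moreover have "2*m dvd 2 * (x - y) \<longleftrightarrow> m dvd (x - y)" using dvd_mult_cancel_left[of 2 m "x-y"] by simp
  ultimately show ?thesis unfolding n2m cong_iff_dvd_diff by (simp add: dvd_mult_cancel_left)
qed

lemma g_eq: "gK x = gK y \<longleftrightarrow> [x = y] (mod m)" "gA x = gA y \<longleftrightarrow> [x = y] (mod m)"
  "gB x = gB y \<longleftrightarrow> [x = y] (mod m)" "gAB x = gAB y \<longleftrightarrow> [x = y] (mod m)"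
  using cong2[of x 0 y] cong2[of x 1 y] by (simp_all add: g_defs delt_eq_iff)

lemma delt_2: "delt n i 2 = delt n i 0" by (simp add: delt_def)

lemma mult_tab:
 "dmult n (gK x) (gK y) = gK (x+y)"
 "dmult n (gK x) (gA y) = gA (x+y)"
 "dmult n (gK x) (gB y) = gB (x+y)"
 "dmult n (gK x) (gAB y) = gAB (x+y)"
 "dmult n (gA x) (gK y) = gA (x+y)"
 "dmult n (gA x) (gA y) = gK (x+y+1)"
 "dmult n (gA x) (gB y) = gAB (x+y)"
 "dmult n (gB x) (gK y) = gB (x-y)"
 "dmult n (gB x) (gA y) = gAB (x-y-1)"
 "dmult n (gB x) (gB y) = gK (x-y)"
  by (simp_all add: g_defs dmult_delt delt_2 algebra_simps)

lemma skew1: "y \<in> D \<Longrightarrow> \<phi> (dmult n (gK i) y) = dmult n (\<phi> (gK i)) (\<phi> y)"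
  using skew[of "gK i" y] P_ker[of i] by (simp add: gK_def)

definition "u = (SOME u. \<phi> (gK 1) = gK u)"
definition "r = (SOME r. 0 \<le> r \<and> r < m \<and> \<phi> (gA 0) = gA r)"
definition "s = (SOME s. 0 \<le> s \<and> s < m \<and> \<phi> (gB 0) = gB s)"

lemma phiK1: "\<phi> (gK 1) = gK u"
proof -
  obtain c where "\<phi> (delt n 2 0) = delt n (2 + 2 * c) 0" using smooth by blast
  then have "\<phi> (gK 1) = gK (1 + c)" by (simp add: gK_def)
  then show ?thesis unfolding u_def by (rule someI)
qed

lemma red: "[x mod m = x] (mod m)" by (simp add: cong_def)
lemma mpos: "m > 0" using m2 by simp

lemma r_prop: "0 \<le> r" "r < m" "\<phi> (gA 0) = gA r"
proof -
  obtain c where "\<phi> (delt n 1 0) = delt n (1 + 2 * c) 0" using smooth by blast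
  then have "\<phi> (gA 0) = gA c" by (simp add: gA_def add.commute)
  also have "gA c = gA (c mod m)" using g_eq red by (metis cong_sym)
  finally have "0 \<le> c mod m \<and> c mod m < m \<and> \<phi> (gA 0) = gA (c mod m)" using mpos by simp
  then have "0 \<le> r \<and> r < m \<and> \<phi> (gA 0) = gA r" unfolding r_def by (rule someI)
  then show "0 \<le> r" "r < m" "\<phi> (gA 0) = gA r" by auto
qed

lemma s_prop: "0 \<le> s" "s < m" "\<phi> (gB 0) = gB s"
proof -
  obtain c where "\<phi> (delt n 0 1) = delt n (0 + 2 * c) 1" using smooth by blast
  then have "\<phi> (gB 0) = gB c" by (simp add: gB_def)
  also have "gB c = gB (c mod m)" using g_eq red by (metis cong_sym)
  finally have "0 \<le> c mod m \<and> c mod m < m \<and> \<phi> (gB 0) = gB (c mod m)" using mpos by simp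
  then have "0 \<le> s \<and> s < m \<and> \<phi> (gB 0) = gB s" unfolding s_def by (rule someI)
  then show "0 \<le> s" "s < m" "\<phi> (gB 0) = gB s" by auto
qed

lemma phiK_nat: "\<phi> (gK (int t)) = gK (int t * u)"
proof (induction t)
  case 0
  then show ?case using phi_one by (simp add: gK_def)
next
  case (Suc t)
  have "gK (int (Suc t)) = dmult n (gK 1) (gK (int t))" by (simp add: mult_tab)
  then have "\<phi> (gK (int (Suc t))) = dmult n (gK u) (gK (int t * u))"
    using skew1 Suc phiK1 by simp
  then show ?case by (simp add: mult_tab algebra_simps)
qed

lemma phiK: "\<phi> (gK t) = gK (t * u)"
proof -
  have "gK t = gK (int (nat (t mod m)))" using g_eq red mpos by (simp add: cong_sym)
  then have "\<phi> (gK t) = gK ((t mod m) * u)" using phiK_nat[of "nat (t mod m)"] mpos by simp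
  also have "\<dots> = gK (t * u)" unfolding g_eq cong_def by (simp add: mod_mult_left_eq)
  finally show ?thesis .
qed

lemma phiA: "\<phi> (gA t) = gA (t * u + r)"
proof -
  have "\<phi> (gA t) = \<phi> (dmult n (gK t) (gA 0))" by (simp add: mult_tab)
  also have "\<dots> = dmult n (\<phi> (gK t)) (\<phi> (gA 0))" by (rule skew1) simp
  finally show ?thesis by (simp add: mult_tab phiK r_prop)
qed

lemma phiB: "\<phi> (gB t) = gB (t * u + s)"
proof -
  have "\<phi> (gB t) = \<phi> (dmult n (gK t) (gB 0))" by (simp add: mult_tab)
  also have "\<dots> = dmult n (\<phi> (gK t)) (\<phi> (gB 0))" by (rule skew1) simp
  finally show ?thesis by (simp add: mult_tab phiK s_prop)
qed

lemma orbit: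
  assumes "\<And>t. \<phi> (g t) = g (t * u + d)"
  shows "(\<phi> ^^ j) (g t) = g (t * u ^ j + d * sigma u j)"
proof (induction j arbitrary: t)
  case 0 then show ?case by simp
next
  case (Suc j)
  have "(\<phi> ^^ Suc j) (g t) = \<phi> ((\<phi> ^^ j) (g t))" by simp
  also have "\<dots> = g ((t * u ^ j + d * sigma u j) * u + d)" using Suc assms by simp
  also have "(t * u ^ j + d * sigma u j) * u + d = t * u ^ Suc j + d * sigma u (Suc j)"
    by (simp add: sigma_Suc2 algebra_simps)
  finally show ?case .
qed

definition "e = P (gA 0)"
definition "f = P (gB 0)"

lemma orbK: "(\<phi> ^^ j) (gK t) = gK (t * u ^ j)" using orbit[of gK 0] phiK by simp
lemma orbA: "(\<phi> ^^ j) (gA t) = gA (t * u ^ j + r * sigma u j)" using orbit[of gA r] phiA by simp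
lemma orbB: "(\<phi> ^^ j) (gB t) = gB (t * u ^ j + s * sigma u j)" using orbit[of gB s] phiB by simp

lemma phiAB0: "\<phi> (gAB 0) = gAB (r + s * sigma u e)"
proof -
  have "\<phi> (gAB 0) = \<phi> (dmult n (gA 0) (gB 0))" by (simp add: mult_tab)
  also have "\<dots> = dmult n (\<phi> (gA 0)) ((\<phi> ^^ e) (gB 0))" unfolding e_def by (rule skew) simp_all
  finally have "\<phi> (gAB 0) = dmult n (gA r) ((\<phi> ^^ e) (gB 0))" using r_prop by simp
  then show ?thesis using orbB[of e 0] by (simp add: mult_tab)
qed

lemma phiAB: "\<phi> (gAB t) = gAB (t * u + (r + s * sigma u e))"
proof -
  have "\<phi> (gAB t) = \<phi> (dmult n (gK t) (gAB 0))" by (simp add: mult_tab)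
  also have "\<dots> = dmult n (\<phi> (gK t)) (\<phi> (gAB 0))" by (rule skew1) simp
  finally show ?thesis by (simp add: mult_tab phiK phiAB0)
qed

lemma orbAB: "(\<phi> ^^ j) (gAB t) = gAB (t * u ^ j + (r + s * sigma u e) * sigma u j)"
  using orbit[of gAB "r + s * sigma u e"] phiAB by simp

lemma P_coset:
  assumes x: "x \<in> D" shows "P (dmult n (gK i) x) = P x"
proof -
  have "(\<phi> ^^ P (dmult n (gK i) x)) z = (\<phi> ^^ P x) z" if z: "z \<in> D" for z
  proof -
    have "dmult n (\<phi> (dmult n (gK i) x)) ((\<phi> ^^ P (dmult n (gK i) x)) z)
        = \<phi> (dmult n (dmult n (gK i) x) z)" by (rule skew[symmetric, OF dmult_in z])
    also have "\<dots> = \<phi> (dmult n (gK i) (dmult n x z))" by (simp only: dmult_assoc[OF g_in(1) x z])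
    also have "\<dots> = dmult n (\<phi> (gK i)) (dmult n (\<phi> x) ((\<phi> ^^ P x) z))"
      by (simp only: skew1[OF dmult_in] skew[OF x z])
    also have "\<dots> = dmult n (dmult n (\<phi> (gK i)) (\<phi> x)) ((\<phi> ^^ P x) z)"
      by (simp only: dmult_assoc[OF phi_in[OF g_in(1)] phi_in[OF x] pow_in[OF z]])
    also have "\<dots> = dmult n (\<phi> (dmult n (gK i) x)) ((\<phi> ^^ P x) z)" by (simp only: skew1[OF x])
    finally show ?thesis by (rule dmult_cancel[OF phi_in[OF dmult_in] pow_in[OF z] pow_in[OF z]])
  qed
  then show ?thesis using pow_uniq P_lt by blast
qed

lemma P_A: "P (gA t) = e"
  using P_coset[of "gA 0" t] unfolding e_def by (simp add: mult_tab)
lemma P_B: "P (gB t) = f"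
  using P_coset[of "gB 0" t] unfolding f_def by (simp add: mult_tab)
lemma P_AB: "P (gAB t) = P (gAB 0)"
  using P_coset[of "gAB 0" t] by (simp add: mult_tab)
lemma P_K: "P (gK t) = 1"
  using P_ker by (simp add: gK_def)

lemma prod_pow:
  assumes y: "y \<in> D" and c: "\<And>l. P ((\<phi> ^^ l) y) = c" and z: "z \<in> D"
  shows "(\<phi> ^^ j) (dmult n y z) = dmult n ((\<phi> ^^ j) y) ((\<phi> ^^ (j * c)) z)"
proof (induction j)
  case 0 then show ?case by simp
next
  case (Suc j)
  have "(\<phi> ^^ Suc j) (dmult n y z) = \<phi> ((\<phi> ^^ j) (dmult n y z))" by simp
  also have "\<dots> = \<phi> (dmult n ((\<phi> ^^ j) y) ((\<phi> ^^ (j * c)) z))"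
    by (simp only: Suc)
  also have "\<dots> = dmult n (\<phi> ((\<phi> ^^ j) y)) ((\<phi> ^^ P ((\<phi> ^^ j) y)) ((\<phi> ^^ (j * c)) z))"
    by (rule skew[OF pow_in[OF y] pow_in[OF z]])
  also have "\<dots> = dmult n ((\<phi> ^^ Suc j) y) ((\<phi> ^^ c) ((\<phi> ^^ (j * c)) z))"
    by (simp only: c funpow.simps o_apply)
  also have "(\<phi> ^^ c) ((\<phi> ^^ (j * c)) z) = (\<phi> ^^ (Suc j * c)) z"
    by (simp add: funpow_add)
  finally show ?case .
qed

lemma P_prod:
  assumes x: "x \<in> D" and y: "y \<in> D" and c: "\<And>l. P ((\<phi> ^^ l) y) = c"
  shows "P (dmult n x y) = (P x * c) mod k"
proof -
  have "(\<phi> ^^ P (dmult n x y)) z = (\<phi> ^^ ((P x * c) mod k)) z" if z: "z \<in> D" for z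
  proof -
    have "dmult n (\<phi> (dmult n x y)) ((\<phi> ^^ P (dmult n x y)) z)
        = \<phi> (dmult n (dmult n x y) z)" by (rule skew[symmetric, OF dmult_in z])
    also have "\<dots> = \<phi> (dmult n x (dmult n y z))" by (simp only: dmult_assoc[OF x y z])
    also have "\<dots> = dmult n (\<phi> x) ((\<phi> ^^ P x) (dmult n y z))" by (rule skew[OF x dmult_in])
    also have "\<dots> = dmult n (\<phi> x) (dmult n ((\<phi> ^^ P x) y) ((\<phi> ^^ (P x * c)) z))"
      by (simp only: prod_pow[OF y c z])
    also have "\<dots> = dmult n (dmult n (\<phi> x) ((\<phi> ^^ P x) y)) ((\<phi> ^^ (P x * c)) z)"
      by (simp only: dmult_assoc[OF phi_in[OF x] pow_in[OF y] pow_in[OF z]])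
    also have "\<dots> = dmult n (\<phi> (dmult n x y)) ((\<phi> ^^ ((P x * c) mod k)) z)"
      by (simp only: skew[OF x y, symmetric] pow_mod[OF z, of "P x * c"])
    finally show ?thesis by (rule dmult_cancel[OF phi_in[OF dmult_in] pow_in[OF z] pow_in[OF z]])
  qed
  then show ?thesis using pow_uniq[OF P_lt] k_pos by simp
qed

lemma ee: "(e * e) mod k = 1"
proof -
  have "P (dmult n (gA 0) (gA 0)) = (P (gA 0) * e) mod k"
    by (rule P_prod) (auto simp: orbA P_A)
  then show ?thesis by (simp add: mult_tab P_K e_def)
qed

lemma ff: "(f * f) mod k = 1"
proof -
  have "P (dmult n (gB 0) (gB 0)) = (P (gB 0) * f) mod k"
    by (rule P_prod) (auto simp: orbB P_B)
  then show ?thesis by (simp add: mult_tab P_K f_def)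
qed

lemma ef: "P (gAB 0) = (e * f) mod k"
proof -
  have "P (dmult n (gA 0) (gB 0)) = (P (gA 0) * f) mod k"
    by (rule P_prod) (auto simp: orbB P_B)
  then show ?thesis by (simp add: mult_tab e_def)
qed

end

context sk begin

lemma P_int: "int (P x) = \<pi> x mod int k"
  using k_pos unfolding P_def by simp

lemma cong_P: "[\<pi> x = int (P x)] (mod int k)"
  unfolding cong_def P_int by simp

lemma e_lt: "e < k" and f_lt: "f < k" unfolding e_def f_def using P_lt by auto

lemma e_ge: "e \<ge> 1" using ee k2 by (cases e) auto
lemma f_ge: "f \<ge> 1" using ff k2 by (cases f) auto

lemma int_mod_eq: "a < k \<Longrightarrow> int a mod int k = int a" by simp

lemma e_ne1: "\<not> [int e = 1] (mod int k)"
proof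
  assume h: "[int e = 1] (mod int k)"
  have "[\<pi> (gA 0) = int e] (mod int k)" using cong_P[of "gA 0"] by (simp add: e_def)
  then have "[\<pi> (delt n 1 0) = 1] (mod int k)" using h cong_trans by (simp add: gA_def) blast
  then have "delt n 1 0 \<in> skew_ker n \<phi> \<pi>" using mem_ker by simp
  then show False using A_notker by simp
qed

lemma f_ne1: "\<not> [int f = 1] (mod int k)"
proof
  assume h: "[int f = 1] (mod int k)"
  have "[\<pi> (gB 0) = int f] (mod int k)" using cong_P[of "gB 0"] by (simp add: f_def)
  then have "[\<pi> (delt n 0 1) = 1] (mod int k)" using h cong_trans by (simp add: gB_def) blast
  then have "delt n 0 1 \<in> skew_ker n \<phi> \<pi>" using mem_ker by simp
  then show False using B_notker by simp
qed

lemma AB_cong: "[\<pi> (gAB t) = int e * int f] (mod int k)"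
proof -
  have "[\<pi> (gAB t) = int (P (gAB t))] (mod int k)" by (rule cong_P)
  moreover have "int (P (gAB t)) = (int e * int f) mod int k" using P_AB ef by (simp add: of_nat_mod)
  ultimately show ?thesis unfolding cong_def by simp
qed

lemma ef_ne1: "\<not> [int e * int f = 1] (mod int k)"
proof
  assume h: "[int e * int f = 1] (mod int k)"
  have "[\<pi> (delt n 1 1) = 1] (mod int k)" using AB_cong[of 0] h cong_trans by (simp add: gAB_def) blast
  then have "delt n 1 1 \<in> skew_ker n \<phi> \<pi>" using mem_ker by simp
  then show False using B_notker by simp
qed

lemma sq_cong: "(a * a) mod k = 1 \<Longrightarrow> [int a ^ 2 = 1] (mod int k)"
  unfolding cong_def power2_eq_square using k2
  by (metis of_nat_mod of_nat_mult of_nat_1 mod_less one_less_numeral_iff semiring_norm(76) less_le_trans of_nat_less_iff)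

lemma sq_gcd: "(a * a) mod k = 1 \<Longrightarrow> gcd (int a) (int k) = 1"
proof -
  assume h: "(a * a) mod k = 1"
  then have "[int a * int a = 1] (mod int k)" using sq_cong[OF h] by (simp add: power2_eq_square)
  then have "coprime (int a * int a) (int k)" using cong_imp_coprime[of 1 "int a * int a" "int k"]
    by (simp add: cong_sym)
  then show ?thesis by simp
qed

lemma cdvd: "[a = b] (mod m) \<longleftrightarrow> m dvd (a - b)" by (rule cong_iff_dvd_diff)

lemma u_coprime: "gcd u m = 1"
proof (rule ccontr)
  assume ne: "gcd u m \<noteq> 1"
  define g where "g = gcd u m"
  have gpos: "g > 0" using mpos unfolding g_def by simp
  then have g2: "g \<ge> 2" using ne unfolding g_def by linarith
  have gu: "g dvd u" and gm: "g dvd m" unfolding g_def by auto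
  define t where "t = m div g"
  have tm: "m = g * t" using gm unfolding t_def by simp
  have tpos: "t > 0" using tm mpos gpos by (simp add: zero_less_mult_iff)
  have tlt: "t < m" using tm g2 tpos by (simp add: mult_less_cancel_right1) 
  obtain v where v: "u = g * v" using gu by blast
  have "t * u = m * v" using tm v by simp
  then have "[t * u = 0 * u] (mod m)" by (simp add: cdvd)
  then have "\<phi> (gK t) = \<phi> (gK 0)" using phiK g_eq by metis
  then have "gK t = gK 0" using bij_betw_imp_inj_on[OF bij] by (simp add: inj_on_def)
  then have "m dvd t" using g_eq by (simp add: cdvd)
  then show False using tpos tlt zdvd_imp_le by fastforce
qed

lemma ue: "[u ^ e = u] (mod m)"
proof -
  have "\<phi> (gA 1) = \<phi> (dmult n (gA 0) (gK 1))" by (simp add: mult_tab)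
  also have "\<dots> = dmult n (\<phi> (gA 0)) ((\<phi> ^^ e) (gK 1))" unfolding e_def by (rule skew) simp_all
  also have "\<dots> = gA (r + u ^ e)" by (simp add: r_prop orbK mult_tab)
  finally have "gA (u + r) = gA (r + u ^ e)" using phiA by simp
  then have "m dvd (u + r - (r + u ^ e))" by (simp add: g_eq cdvd)
  then show ?thesis by (simp add: cdvd dvd_diff_commute)
qed

lemma uf: "[u ^ f = u] (mod m)"
proof -
  have "\<phi> (gB (-1)) = \<phi> (dmult n (gB 0) (gK 1))" by (simp add: mult_tab)
  also have "\<dots> = dmult n (\<phi> (gB 0)) ((\<phi> ^^ f) (gK 1))" unfolding f_def by (rule skew) simp_all
  also have "\<dots> = gB (s - u ^ f)" by (simp add: s_prop orbK mult_tab)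
  finally have "gB (-u + s) = gB (s - u ^ f)" using phiB by simp
  then have "m dvd (-u + s - (s - u ^ f))" by (simp add: g_eq cdvd)
  then show ?thesis by (simp add: cdvd)
qed

lemma pred_cong: "[u ^ j = u] (mod m) \<Longrightarrow> j \<ge> 1 \<Longrightarrow> [u ^ (j - 1) = 1] (mod m)"
proof -
  assume h: "[u ^ j = u] (mod m)" "j \<ge> 1"
  have "u ^ j = u * u ^ (j - 1)" using h(2) by (metis Suc_diff_1 less_le_trans zero_less_one power_Suc)
  then have "[u * u ^ (j - 1) = u * 1] (mod m)" using h(1) by simp
  moreover have cp: "coprime u m" using u_coprime coprime_iff_gcd_eq_1 by blast
  ultimately show ?thesis using cong_mult_lcancel[OF cp, of "u ^ (j - 1)" 1] by blast
qed

lemma ue1: "[u ^ (e - 1) = 1] (mod m)" using pred_cong[OF ue e_ge] .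
lemma uf1: "[u ^ (f - 1) = 1] (mod m)" using pred_cong[OF uf f_ge] .

lemma H_d: "m dvd (u - (r + r * sigma u e + 1))"
proof -
  have "\<phi> (gK 1) = \<phi> (dmult n (gA 0) (gA 0))" by (simp add: mult_tab)
  also have "\<dots> = dmult n (\<phi> (gA 0)) ((\<phi> ^^ e) (gA 0))" unfolding e_def by (rule skew) simp_all
  also have "\<dots> = gK (r + r * sigma u e + 1)" by (simp add: r_prop orbA mult_tab)
  finally have "gK u = gK (r + r * sigma u e + 1)" using phiK1 by simp
  then show ?thesis by (simp add: g_eq cdvd)
qed

lemma H_e: "m dvd (0 - (s - s * sigma u f))"
proof -
  have "\<phi> (gK 0) = \<phi> (dmult n (gB 0) (gB 0))" by (simp add: mult_tab)
  also have "\<dots> = dmult n (\<phi> (gB 0)) ((\<phi> ^^ f) (gB 0))" unfolding f_def by (rule skew) simp_all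
  also have "\<dots> = gK (s - s * sigma u f)" by (simp add: s_prop orbB mult_tab)
  finally have "gK 0 = gK (s - s * sigma u f)" using phiK[of 0] by simp
  then show ?thesis by (simp only: g_eq cdvd)
qed

lemma H_f: "m dvd ((-u + (r + s * sigma u e)) - (s - r * sigma u f - 1))"
proof -
  have "\<phi> (gAB (-1)) = \<phi> (dmult n (gB 0) (gA 0))" by (simp add: mult_tab)
  also have "\<dots> = dmult n (\<phi> (gB 0)) ((\<phi> ^^ f) (gA 0))" unfolding f_def by (rule skew) simp_all
  also have "\<dots> = gAB (s - r * sigma u f - 1)" by (simp add: s_prop orbA mult_tab)
  finally have "gAB (-u + (r + s * sigma u e)) = gAB (s - r * sigma u f - 1)" using phiAB[of "-1"] by simp
  then show ?thesis by (simp only: g_eq cdvd)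
qed

lemma res_d: "[r * sigma u (e - 1) = u - 2*r - 1] (mod m)"
proof -
  have se: "sigma u e = sigma u (e - 1) + u ^ (e - 1)" using sigma_pred e_ge by blast
  have "r * sigma u (e - 1) - (u - 2*r - 1) = - (u - (r + r * sigma u e + 1)) - r * (u ^ (e - 1) - 1)"
    unfolding se by (simp add: algebra_simps)
  moreover have "m dvd (- (u - (r + r * sigma u e + 1)) - r * (u ^ (e - 1) - 1))"
    using H_d ue1[unfolded cdvd] by (simp only: dvd_diff dvd_minus_iff dvd_mult)
  ultimately show ?thesis unfolding cdvd by (simp only:)
qed

lemma res_e: "[s * sigma u (f - 1) = 0] (mod m)"
proof -
  have sf: "sigma u f = sigma u (f - 1) + u ^ (f - 1)" using sigma_pred f_ge by blast
  have "s * sigma u (f - 1) - 0 = (0 - (s - s * sigma u f)) - s * (u ^ (f - 1) - 1)"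
    unfolding sf by (simp add: algebra_simps)
  moreover have "m dvd ((0 - (s - s * sigma u f)) - s * (u ^ (f - 1) - 1))"
    using H_e uf1[unfolded cdvd] by (simp only: dvd_diff dvd_minus_iff dvd_mult)
  ultimately show ?thesis unfolding cdvd by (simp only:)
qed

lemma res_f: "[r * sigma u (f - 1) + s * sigma u (e - 1) = u - 2*r - 1] (mod m)"
proof -
  have se: "sigma u e = sigma u (e - 1) + u ^ (e - 1)" using sigma_pred e_ge by blast
  have sf: "sigma u f = sigma u (f - 1) + u ^ (f - 1)" using sigma_pred f_ge by blast
  have "r * sigma u (f - 1) + s * sigma u (e - 1) - (u - 2*r - 1) =
     ((-u + (r + s * sigma u e)) - (s - r * sigma u f - 1)) - s * (u ^ (e - 1) - 1) - r * (u ^ (f - 1) - 1)"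
    unfolding se sf by (simp add: algebra_simps)
  moreover have "m dvd (((-u + (r + s * sigma u e)) - (s - r * sigma u f - 1)) - s * (u ^ (e - 1) - 1) - r * (u ^ (f - 1) - 1))"
    using H_f ue1[unfolded cdvd] uf1[unfolded cdvd] by (simp only: dvd_diff dvd_minus_iff dvd_mult)
  ultimately show ?thesis unfolding cdvd by (simp only:)
qed

lemma ka: "[r * sigma u k = 0] (mod m)" "[s * sigma u k = 0] (mod m)"
proof -
  have "gA (0 * u ^ k + r * sigma u k) = gA 0" using orbA[of k 0] k_id[of "gA 0"] by simp
  then show "[r * sigma u k = 0] (mod m)" by (simp add: g_eq)
  have "gB (0 * u ^ k + s * sigma u k) = gB 0" using orbB[of k 0] k_id[of "gB 0"] by simp
  then show "[s * sigma u k = 0] (mod m)" by (simp add: g_eq)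
qed

lemma D_cases: "x \<in> D \<Longrightarrow> \<exists>t. x = gK t \<or> x = gA t \<or> x = gB t \<or> x = gAB t"
proof -
  assume x: "x \<in> D"
  then have x': "x = delt n (fst x) (snd x)" by (rule dih_delt)
  have sn: "snd x = 0 \<or> snd x = 1" using x by (auto simp: dih_def)
  have "fst x = 2 * (fst x div 2) \<or> fst x = 2 * (fst x div 2) + 1" by presburger
  then show ?thesis using sn x' unfolding g_defs by metis
qed

lemma kmin: "0 < j \<Longrightarrow> j < k \<Longrightarrow> \<not> ([r * sigma u j = 0] (mod m) \<and> [s * sigma u j = 0] (mod m))"
proof
  assume j: "0 < j" "j < k" and h: "[r * sigma u j = 0] (mod m) \<and> [s * sigma u j = 0] (mod m)"
  have hr: "m dvd r * sigma u j" and hs: "m dvd s * sigma u j" using h by (auto simp: cdvd)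
  have "u ^ j - 1 = (u - (r + r * sigma u e + 1)) * sigma u j + (1 + sigma u e) * (r * sigma u j)"
    using sigma_geom[of u j] by (simp add: algebra_simps)
  moreover have "m dvd (u - (r + r * sigma u e + 1)) * sigma u j + (1 + sigma u e) * (r * sigma u j)"
    using H_d hr by (simp only: dvd_add dvd_mult dvd_mult2)
  ultimately have uj: "m dvd (u ^ j - 1)" by simp
  have gen: "m dvd t * (u ^ j - 1) + d * sigma u j \<Longrightarrow> [t * u ^ j + d * sigma u j = t] (mod m)" for t d
    unfolding cdvd by (simp add: algebra_simps)
  have tj: "m dvd t * (u ^ j - 1)" for t using uj by simp
  have "(\<phi> ^^ j) x = x" if x: "x \<in> D" for x
  proof -
    obtain t where "x = gK t \<or> x = gA t \<or> x = gB t \<or> x = gAB t" using D_cases x by blast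
    moreover have "(\<phi> ^^ j) (gK t) = gK t" unfolding orbK g_eq
      using gen[of t 0] tj[of t] by simp
    moreover have "(\<phi> ^^ j) (gA t) = gA t" unfolding orbA g_eq
      using gen[of t r] tj[of t] hr by (simp only: dvd_add)
    moreover have "(\<phi> ^^ j) (gB t) = gB t" unfolding orbB g_eq
      using gen[of t s] tj[of t] hs by (simp only: dvd_add)
    moreover have "m dvd (r + s * sigma u e) * sigma u j"
    proof -
      have "(r + s * sigma u e) * sigma u j = r * sigma u j + sigma u e * (s * sigma u j)"
        by (simp add: algebra_simps)
      then show ?thesis using hr hs by (simp only: dvd_add dvd_mult)
    qed
    then have "(\<phi> ^^ j) (gAB t) = gAB t" unfolding orbAB g_eq
      using gen[of t "r + s * sigma u e"] tj[of t] by (simp only: dvd_add)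
    ultimately show ?thesis by blast
  qed
  then show False using k_min[OF j] by blast
qed

lemma main: "\<exists>r s u :: int. \<exists>e f :: nat.
     0 \<le> r \<and> r < m \<and> 0 \<le> s \<and> s < m \<and> gcd u m = 1 \<and>
     1 \<le> e \<and> e \<le> k - 1 \<and> 1 \<le> f \<and> f \<le> k - 1 \<and>
     (\<forall>i::int.
        \<phi> (delt n (2*i) 0) = delt n (2*i*u) 0 \<and>
        \<phi> (delt n (2*i+1) 0) = delt n (2*i*u + 2*r + 1) 0 \<and>
        \<phi> (delt n (2*i) 1) = delt n (2*i*u + 2*s) 1 \<and>
        \<phi> (delt n (2*i+1) 1) = delt n (2*i*u + 2*r + 2*s*sigma u e + 1) 1 \<and>
        [\<pi> (delt n (2*i) 0) = 1] (mod int k) \<and>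
        [\<pi> (delt n (2*i+1) 0) = int e] (mod int k) \<and>
        [\<pi> (delt n (2*i) 1) = int f] (mod int k) \<and>
        [\<pi> (delt n (2*i+1) 1) = int e * int f] (mod int k)) \<and>
     (k > 0 \<and> [r * sigma u k = 0] (mod m) \<and> [s * sigma u k = 0] (mod m) \<and>
        (\<forall>j::nat. 0 < j \<and> j < k \<longrightarrow>
           \<not> ([r * sigma u j = 0] (mod m) \<and> [s * sigma u j = 0] (mod m)))) \<and>
     (gcd (int e) (int k) = 1 \<and> gcd (int f) (int k) = 1 \<and>
        \<not> [int e = 1] (mod int k) \<and> \<not> [int f = 1] (mod int k) \<and>
        \<not> [int e * int f = 1] (mod int k) \<and>
        [int e ^ 2 = 1] (mod int k) \<and> [int f ^ 2 = 1] (mod int k)) \<and>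
     ([u ^ (e - 1) = 1] (mod m) \<and> [u ^ (f - 1) = 1] (mod m)) \<and>
     [r * sigma u (e - 1) = u - 2*r - 1] (mod m) \<and>
     [s * sigma u (f - 1) = 0] (mod m) \<and>
     [r * sigma u (f - 1) + s * sigma u (e - 1) = u - 2*r - 1] (mod m)"
proof -
  have I: "\<phi> (delt n (2*i) 0) = delt n (2*i*u) 0 \<and>
        \<phi> (delt n (2*i+1) 0) = delt n (2*i*u + 2*r + 1) 0 \<and>
        \<phi> (delt n (2*i) 1) = delt n (2*i*u + 2*s) 1 \<and>
        \<phi> (delt n (2*i+1) 1) = delt n (2*i*u + 2*r + 2*s*sigma u e + 1) 1 \<and>
        [\<pi> (delt n (2*i) 0) = 1] (mod int k) \<and>
        [\<pi> (delt n (2*i+1) 0) = int e] (mod int k) \<and>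
        [\<pi> (delt n (2*i) 1) = int f] (mod int k) \<and>
        [\<pi> (delt n (2*i+1) 1) = int e * int f] (mod int k)" for i
  proof (intro conjI)
    show "\<phi> (delt n (2*i) 0) = delt n (2*i*u) 0" using phiK[of i] by (simp add: gK_def mult.assoc)
    show "\<phi> (delt n (2*i+1) 0) = delt n (2*i*u + 2*r + 1) 0" using phiA[of i]
      by (simp add: gA_def algebra_simps)
    show "\<phi> (delt n (2*i) 1) = delt n (2*i*u + 2*s) 1" using phiB[of i]
      by (simp add: gB_def algebra_simps)
    show "\<phi> (delt n (2*i+1) 1) = delt n (2*i*u + 2*r + 2*s*sigma u e + 1) 1" using phiAB[of i]
      by (simp add: gAB_def algebra_simps)
    show "[\<pi> (delt n (2*i) 0) = 1] (mod int k)" by (rule ker_cong)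
    show "[\<pi> (delt n (2*i+1) 0) = int e] (mod int k)" using cong_P[of "gA i"] P_A[of i]
      by (simp add: gA_def)
    show "[\<pi> (delt n (2*i) 1) = int f] (mod int k)" using cong_P[of "gB i"] P_B[of i]
      by (simp add: gB_def)
    show "[\<pi> (delt n (2*i+1) 1) = int e * int f] (mod int k)" using AB_cong[of i]
      by (simp add: gAB_def)
  qed
  show ?thesis
    apply (rule exI[of _ r], rule exI[of _ s], rule exI[of _ u], rule exI[of _ e], rule exI[of _ f])
    using r_prop s_prop u_coprime e_ge e_lt f_ge f_lt I k_pos ka kmin sq_gcd[OF ee] sq_gcd[OF ff]
      e_ne1 f_ne1 ef_ne1 sq_cong[OF ee] sq_cong[OF ff] ue1 uf1 res_d res_e res_f
    by auto
qed

end

theorem theorem5: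
  fixes n :: nat and \<phi> :: "int \<times> int \<Rightarrow> int \<times> int" and \<pi> :: "int \<times> int \<Rightarrow> int"
  assumes "n \<ge> 4" and "even n"
    and "skew_morphism n \<phi> \<pi>"
    and "skew_smooth n \<phi> \<pi>"
    and "skew_ker n \<phi> \<pi> = {delt n (2 * i) 0 | i. True}"
  defines "k \<equiv> skew_order n \<phi>" and "m \<equiv> int n div 2"
  shows "\<exists>r s u :: int. \<exists>e f :: nat.
     0 \<le> r \<and> r < m \<and> 0 \<le> s \<and> s < m \<and> gcd u m = 1 \<and>
     1 \<le> e \<and> e \<le> k - 1 \<and> 1 \<le> f \<and> f \<le> k - 1 \<and>
     (\<forall>i::int.
        \<phi> (delt n (2*i) 0) = delt n (2*i*u) 0 \<and>
        \<phi> (delt n (2*i+1) 0) = delt n (2*i*u + 2*r + 1) 0 \<and>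
        \<phi> (delt n (2*i) 1) = delt n (2*i*u + 2*s) 1 \<and>
        \<phi> (delt n (2*i+1) 1) = delt n (2*i*u + 2*r + 2*s*sigma u e + 1) 1 \<and>
        [\<pi> (delt n (2*i) 0) = 1] (mod int k) \<and>
        [\<pi> (delt n (2*i+1) 0) = int e] (mod int k) \<and>
        [\<pi> (delt n (2*i) 1) = int f] (mod int k) \<and>
        [\<pi> (delt n (2*i+1) 1) = int e * int f] (mod int k)) \<and>
     (k > 0 \<and> [r * sigma u k = 0] (mod m) \<and> [s * sigma u k = 0] (mod m) \<and>
        (\<forall>j::nat. 0 < j \<and> j < k \<longrightarrow>
           \<not> ([r * sigma u j = 0] (mod m) \<and> [s * sigma u j = 0] (mod m)))) \<and>
     (gcd (int e) (int k) = 1 \<and> gcd (int f) (int k) = 1 \<and>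
        \<not> [int e = 1] (mod int k) \<and> \<not> [int f = 1] (mod int k) \<and>
        \<not> [int e * int f = 1] (mod int k) \<and>
        [int e ^ 2 = 1] (mod int k) \<and> [int f ^ 2 = 1] (mod int k)) \<and>
     ([u ^ (e - 1) = 1] (mod m) \<and> [u ^ (f - 1) = 1] (mod m)) \<and>
     [r * sigma u (e - 1) = u - 2*r - 1] (mod m) \<and>
     [s * sigma u (f - 1) = 0] (mod m) \<and>
     [r * sigma u (f - 1) + s * sigma u (e - 1) = u - 2*r - 1] (mod m)"
proof -
  interpret S: sk n \<phi> \<pi> by (unfold_locales; fact assms)
  have "S.k = k" unfolding S.k_def k_def ..
  moreover have "S.m = m" unfolding S.m_def m_def ..
  ultimately show ?thesis using S.main by simp
qed

end
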